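(* If $\dim M=8$, then, writing $A_a=2^k\cosh(\tfrac{a_1}{2}c)\cdots\cosh(\tfrac{a_k}{2}c)\widehat A(TM,\nabla^{TM})$ and $A_b=2^k\cosh(\tfrac{b_1}{2}c)\cdots\cosh(\tfrac{b_k}{2}c)\widehat A(TM,\nabla^{TM})$, $$\{A_a\}^{(8)}-\{A_b\}^{(8)}-\tfrac{1}{16}\{A_b\,\mathrm{ch}(W)\}^{(8)}=-\tfrac{1}{24}\{P\,A_a\}^{(8)}+\tfrac{1}{24}\{P\,A_b\}^{(8)}+\tfrac{1}{384}\{P\,A_b\,\mathrm{ch}(W)\}^{(8)}+\tfrac{1}{18432}\{P^2\,2^k\,\mathrm{ch}(W)\}^{(8)}.$$
   Context: $M$ is a Riemannian manifold with Levi-Civita connection $\nabla^{TM}$ and curvature $R^{TM}$; characteristic forms are Chern–Weil forms of the given connections and $\omega^{(i)}$ denotes the degree-$i$ component. $\mathrm{ch}(E)=\mathrm{tr}\exp(\frac{\sqrt{-1}}{2\pi}R^E)$, extended additively to formal differences; $\widetilde E=E-\dim E\cdot\mathbb{C}$. $\widehat A(TM,\nabla^{TM})=\det^{1/2}\Big(\frac{\frac{\sqrt{-1}}{4\pi}R^{TM}}{\sinh(\frac{\sqrt{-1}}{4\pi}R^{TM})}\Big)$; $p_1$ is the first Pontryagin form. $\xi$ is a complex line bundle with Hermitian connection; for $m\in\mathbb{Z}$, $(\xi^{\otimes m})_{\mathbb{R}}$ is the underlying real oriented rank-two bundle of $\xi^{\otimes m}$, $\xi_{\mathbb{R}}=(\xi^{\otimes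 1})_{\mathbb{R}}$, and the formal Chern roots of $\xi_{\mathbb{R}}\otimes\mathbb{C}$ are $\pm c$. $k\ge1$, $a_t,b_t\in\mathbb{Z}$. $P=p_1(TM)-\sum_{t=1}^k(a_t^2+2b_t^2)p_1(\xi_{\mathbb{R}})$ and $W=\sum_{t=1}^k\big(\widetilde{(\xi^{\otimes b_t})_{\mathbb{R}}\otimes\mathbb{C}}-\widetilde{(\xi^{\otimes a_t})_{\mathbb{R}}\otimes\mathbb{C}}\big)$. *)

theory Defs
  imports "HOL-Computational_Algebra.Formal_Power_Series"
begin

text \<open>A formal variable t
is attached to each formal Chern root (a 2-form): root r stands for r*t,
so the form-degree-2i component of a characteristic form is the coefficient
of t^i.  fps_exp a is exp(a t) (library).\<close>

definition fps_cosh :: "real \<Rightarrow> real fps" where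
  "fps_cosh a = fps_const (1/2) * (fps_exp a + fps_exp (-a))"

text \<open>sinh(a t)/(a t) (equal to 1 when a = 0).\<close>
definition fps_sinhc :: "real \<Rightarrow> real fps" where
  "fps_sinhc a = Abs_fps (\<lambda>n. if even n then a ^ n / fact (n + 1) else 0)"

text \<open>A-hat form of an 8-manifold with formal Pontryagin roots x 0,...,x 3:
  product over j of (x_j t/2) / sinh(x_j t/2).\<close>
definition Ahat8 :: "(nat \<Rightarrow> real) \<Rightarrow> real fps" where
  "Ahat8 x = (\<Prod>j<4. inverse (fps_sinhc (x j / 2)))"

definition p1TM8 :: "(nat \<Rightarrow> real) \<Rightarrow> real fps" where
  "p1TM8 x = fps_const (\<Sum>j<4. (x j)^2) * fps_X ^ 2"

definition p1xi :: "real \<Rightarrow> real fps" where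
  "p1xi c = fps_const (c^2) * fps_X ^ 2"

text \<open>ch of (xi^m)_R tensor C = xi^m + xi^(-m): exp(m c t) + exp(-m c t).\<close>
definition ch_xiR :: "real \<Rightarrow> int \<Rightarrow> real fps" where
  "ch_xiR c m = fps_exp (of_int m * c) + fps_exp (- (of_int m * c))"

definition ch_xiR_red :: "real \<Rightarrow> int \<Rightarrow> real fps" where
  "ch_xiR_red c m = ch_xiR c m - 2"

definition chW :: "real \<Rightarrow> nat \<Rightarrow> (nat \<Rightarrow> int) \<Rightarrow> (nat \<Rightarrow> int) \<Rightarrow> real fps" where
  "chW c k a b = (\<Sum>t\<in>{1..k}. ch_xiR_red c (b t) - ch_xiR_red c (a t))"

definition Pform :: "(nat \<Rightarrow> real) \<Rightarrow> real \<Rightarrow> nat \<Rightarrow> (nat \<Rightarrow> int) \<Rightarrow> (nat \<Rightarrow> int) \<Rightarrow> real fps" where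
  "Pform x c k a b = p1TM8 x - fps_const (\<Sum>t\<in>{1..k}. of_int ((a t)^2 + 2 * (b t)^2)) * p1xi c"

definition Aform :: "(nat \<Rightarrow> real) \<Rightarrow> real \<Rightarrow> nat \<Rightarrow> (nat \<Rightarrow> int) \<Rightarrow> real fps" where
  "Aform x c k a = fps_const (2 ^ k) * (\<Prod>t\<in>{1..k}. fps_cosh (of_int (a t) * c / 2)) * Ahat8 x"

definition deg8 :: "real fps \<Rightarrow> real" where
  "deg8 f = fps_nth f 4"

end

theory Submission
  imports Defs
begin
unbundle fps_syntax

definition ev4 :: "real fps \<Rightarrow> real \<Rightarrow> real \<Rightarrow> bool" where
  "ev4 f u v \<longleftrightarrow> f $ 0 = 1 \<and> f $ 1 = 0 \<and> f $ 2 = u \<and> f $ 3 = 0 \<and> f $ 4 = v"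

lemma sum5: "(\<Sum>i=0..(4::nat). h i) = h 0 + h 1 + h 2 + h 3 + (h 4 :: real)"
  by (simp add: numeral_eq_Suc atLeast0AtMost)
lemma sum4: "(\<Sum>i=0..(3::nat). h i) = h 0 + h 1 + h 2 + (h 3 :: real)"
  by (simp add: numeral_eq_Suc atLeast0AtMost)
lemma sum3: "(\<Sum>i=0..(2::nat). h i) = h 0 + h 1 + (h 2 :: real)"
  by (simp add: numeral_eq_Suc atLeast0AtMost)

lemma mult_nth_small:
  fixes f g :: "real fps"
  shows "(f*g) $ 0 = f $ 0*g $ 0" "(f*g) $ 1 = f $ 0*g $ 1 + f $ 1*g $ 0"
   "(f*g) $ 2 = f $ 0*g $ 2 + f $ 1*g $ 1 + f $ 2*g $ 0"
   "(f*g) $ 3 = f $ 0*g $ 3 + f $ 1*g $ 2 + f $ 2*g $ 1 + f $ 3*g $ 0"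
   "(f*g) $ 4 = f $ 0*g $ 4 + f $ 1*g $ 3 + f $ 2*g $ 2 + f $ 3*g $ 1 + f $ 4*g $ 0"
  by (simp_all add: fps_mult_nth sum5 sum4 sum3)

lemma ev4_mult: "ev4 f u v \<Longrightarrow> ev4 g u' v' \<Longrightarrow> ev4 (f*g) (u+u') (v + u*u' + v')"
  unfolding ev4_def by (simp add: mult_nth_small algebra_simps)

lemma ev4_prod:
  assumes "finite S" "\<And>i. i \<in> S \<Longrightarrow> ev4 (f i) (u i) (v i)"
  shows "ev4 (prod f S) (\<Sum>i\<in>S. u i) ((\<Sum>i\<in>S. v i) + ((\<Sum>i\<in>S. u i)^2 - (\<Sum>i\<in>S. (u i)^2))/2)"
  using assms
proof (induction S rule: finite_induct)
  case empty
  then show ?case by (simp add: ev4_def)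
next
  case (insert i S)
  have "ev4 (f i * prod f S) (u i + (\<Sum>i\<in>S. u i)) (v i + u i * (\<Sum>i\<in>S. u i) + ((\<Sum>i\<in>S. v i) + ((\<Sum>i\<in>S. u i)^2 - (\<Sum>i\<in>S. (u i)^2))/2))"
    using insert by (intro ev4_mult) auto
  moreover have "v i + u i * (\<Sum>i\<in>S. u i) + ((\<Sum>i\<in>S. v i) + ((\<Sum>i\<in>S. u i)^2 - (\<Sum>i\<in>S. (u i)^2))/2)
     = (v i + (\<Sum>i\<in>S. v i)) + ((u i + (\<Sum>i\<in>S. u i))^2 - ((u i)^2 + (\<Sum>i\<in>S. (u i)^2)))/2"
    by (simp add: field_simps power2_eq_square)
  ultimately show ?case using insert by simp
qed

lemma ev4_cosh: "ev4 (fps_cosh a) (a^2/2) (a^4/24)"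
  unfolding ev4_def fps_cosh_def by (simp add: fps_exp_def fact_numeral power2_eq_square)

lemma ev4_invsinhc: "ev4 (inverse (fps_sinhc y)) (- (y^2/6)) (7*y^4/360)"
proof -
  define f where "f = fps_sinhc y"
  define g where "g = inverse f"
  have f0: "f $ 0 = 1" "f $ 1 = 0" "f $ 2 = y^2/6" "f $ 3 = 0" "f $ 4 = y^4/120"
    by (simp_all add: f_def fps_sinhc_def fact_numeral)
  have fg: "f * g = 1" unfolding g_def using f0 by (simp add: inverse_mult_eq_1')
  have e: "(f*g) $ n = (1::real fps) $ n" for n using fg by simp
  have g0: "g $ 0 = 1" using e[of 0] f0 by (simp add: mult_nth_small)
  have g1: "g $ 1 = 0" using e[of 1] f0 g0 by (simp add: mult_nth_small)
  have g2: "g $ 2 = - (y^2/6)" using e[of 2] f0 g0 g1 by (simp add: mult_nth_small)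
  have g3: "g $ 3 = 0" using e[of 3] f0 g0 g1 g2 by (simp add: mult_nth_small)
  have g4: "g $ 4 = 7*y^4/360" using e[of 4] f0 g0 g1 g2 g3 by (simp add: mult_nth_small)
  show ?thesis unfolding ev4_def using g0 g1 g2 g3 g4 by (simp add: g_def f_def)
qed

lemma Ahat_ev4: "ev4 (Ahat8 x) (\<Sum>j<4. - ((x j/2)^2/6))
   ((\<Sum>j<4. 7*(x j/2)^4/360) + ((\<Sum>j<4. - ((x j/2)^2/6))^2 - (\<Sum>j<4. (- ((x j/2)^2/6))^2))/2)"
  unfolding Ahat8_def by (rule ev4_prod) (auto intro: ev4_invsinhc)

lemma C_ev4:
  fixes k :: nat and a :: "nat \<Rightarrow> int"
  shows "ev4 (\<Prod>t\<in>{1..k}. fps_cosh (of_int (a t) * c / 2))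
   (\<Sum>t\<in>{1..k}. (of_int (a t) * c / 2)^2/2)
   ((\<Sum>t\<in>{1..k}. (of_int (a t) * c / 2)^4/24) + ((\<Sum>t\<in>{1..k}. (of_int (a t) * c / 2)^2/2)^2 - (\<Sum>t\<in>{1..k}. ((of_int (a t) * c / 2)^2/2)^2))/2)"
  by (rule ev4_prod) (auto intro: ev4_cosh)

lemma Aform_nth:
  fixes k :: nat and a :: "nat \<Rightarrow> int"
  assumes "ev4 (\<Prod>t\<in>{1..k}. fps_cosh (of_int (a t) * c / 2)) u v" "ev4 (Ahat8 x) u' v'"
  shows "Aform x c k a $ 0 = 2^k" "Aform x c k a $ 2 = 2^k * (u + u')"
    "Aform x c k a $ 4 = 2^k * (v + u*u' + v')"
proof -
  have "ev4 ((\<Prod>t\<in>{1..k}. fps_cosh (of_int (a t) * c / 2)) * Ahat8 x) (u+u') (v + u*u' + v')"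
    using assms by (rule ev4_mult)
  then show "Aform x c k a $ 0 = 2^k" "Aform x c k a $ 2 = 2^k * (u + u')"
    "Aform x c k a $ 4 = 2^k * (v + u*u' + v')"
    unfolding Aform_def ev4_def by (simp_all add: mult.assoc)
qed

lemma chred_nth: "ch_xiR_red c m $ 0 = 0" "ch_xiR_red c m $ 1 = 0"
  "ch_xiR_red c m $ 2 = (of_int m * c)^2" "ch_xiR_red c m $ 3 = 0"
  "ch_xiR_red c m $ 4 = (of_int m * c)^4 / 12"
  by (simp_all add: ch_xiR_red_def ch_xiR_def fps_exp_def fact_numeral fps_numeral_nth)

lemma chW_nth:
  fixes k :: nat and a b :: "nat \<Rightarrow> int"
  shows "chW c k a b $ 0 = 0" "chW c k a b $ 1 = 0"
  "chW c k a b $ 2 = (\<Sum>t\<in>{1..k}. (of_int (b t) * c)^2 - (of_int (a t) * c)^2)" "chW c k a b $ 3 = 0"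
  "chW c k a b $ 4 = (\<Sum>t\<in>{1..k}. (of_int (b t) * c)^4/12 - (of_int (a t) * c)^4/12)"
  by (simp_all add: chW_def fps_sum_nth chred_nth chred_nth(2)[simplified])

lemma Pform_eq:
  fixes k :: nat and a b :: "nat \<Rightarrow> int"
  shows "Pform x c k a b = fps_const ((\<Sum>j<4. (x j)^2) - (\<Sum>t\<in>{1..k}. of_int ((a t)^2 + 2 * (b t)^2)) * c^2) * fps_X^2"
  unfolding Pform_def p1TM8_def p1xi_def by (simp only: mult.assoc[symmetric] fps_const_mult left_diff_distrib[symmetric] fps_const_sub)

lemma PX4: "(fps_const Q * (fps_X^2 * F)) $ 4 = Q * F $ 2"
proof -
  show ?thesis by (simp add: fps_X_power_mult_nth)
qed

lemma P2X: "((fps_const Q * fps_X^2)^2 * G) $ 4 = Q^2 * (G $ 0 :: real)"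
proof -
  have "(fps_const Q * fps_X^2)^2 * G = fps_X^4 * (fps_const (Q^2) * G)"
    by (simp only: power_mult_distrib fps_const_power power_mult[symmetric] mult.assoc num_double numeral_times_numeral, simp)
  then have "((fps_const Q * fps_X^2)^2 * G) $ 4 = (fps_X^4 * (fps_const (Q^2) * G)) $ 4" by (rule arg_cong)
  also have "\<dots> = Q^2 * G $ 0" by (simp only: fps_X_power_mult_nth) simp
  finally show ?thesis .
qed

lemma sumA:
  fixes S :: "nat set" and r :: "nat \<Rightarrow> real"
  shows "(\<Sum>t\<in>S. (r t * c / 2)^2/2) = c^2/8 * (\<Sum>t\<in>S. (r t)^2)"
    "(\<Sum>t\<in>S. (r t * c / 2)^4/24) = c^4/384 * (\<Sum>t\<in>S. (r t)^4)"
    "(\<Sum>t\<in>S. ((r t * c / 2)^2/2)^2) = c^4/64 * (\<Sum>t\<in>S. (r t)^4)"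
    "(\<Sum>j\<in>S. - ((r j/2)^2/6)) = - (\<Sum>j\<in>S. (r j)^2)/24"
    "(\<Sum>j\<in>S. 7*(r j/2)^4/360) = 7 * (\<Sum>j\<in>S. (r j)^4)/5760"
    "(\<Sum>j\<in>S. (- ((r j/2)^2/6))^2) = (\<Sum>j\<in>S. (r j)^4)/576"
  by (simp_all add: sum_distrib_left sum_divide_distrib power_mult_distrib power_divide sum_negf mult_ac)

lemma sumB:
  fixes S :: "nat set" and a b :: "nat \<Rightarrow> int" and c :: real
  shows "(\<Sum>t\<in>S. (of_int (b t) * c)^2 - (of_int (a t) * c)^2) = c^2 * ((\<Sum>t\<in>S. (of_int (b t))^2) - (\<Sum>t\<in>S. (of_int (a t))^2))"
    "(\<Sum>t\<in>S. (of_int (b t) * c)^4/12 - (of_int (a t) * c)^4/12) = c^4/12 * ((\<Sum>t\<in>S. (of_int (b t))^4) - (\<Sum>t\<in>S. (of_int (a t))^4))"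
    "(\<Sum>t\<in>S. (of_int ((a t)^2 + 2 * (b t)^2) :: real)) = (\<Sum>t\<in>S. (of_int (a t))^2) + 2 * (\<Sum>t\<in>S. (of_int (b t))^2)"
  by (simp_all add: sum_distrib_left sum_subtractf sum.distrib power_mult_distrib mult_ac right_diff_distrib sum_divide_distrib)

lemma alg:
  fixes K c X2 X4 A2 A4 B2 B4 :: real
  shows "K *
     (c ^ 4 / 384 * A4 + ((c^2 / 8 * A2)^2 - c ^ 4 / 64 * A4) / 2 +
      c^2 / 8 * A2 * (- X2 / 24) +
      (7 * X4 / 5760 + ((- X2 / 24)^2 - X4 / 576) / 2)) -
     K *
     (c ^ 4 / 384 * B4 + ((c^2 / 8 * B2)^2 - c ^ 4 / 64 * B4) / 2 +
      c^2 / 8 * B2 * (- X2 / 24) +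
      (7 * X4 / 5760 + ((- X2 / 24)^2 - X4 / 576) / 2)) -
     1 / 16 *
     (K * (c ^ 4 / 12 * (B4 - A4)) +
      K * (c^2 / 8 * B2 + - X2 / 24) * (c^2 * (B2 - A2))) =
     - 1 / 24 *
     ((X2 - (A2 + 2 * B2) * c^2) * (K * (c^2 / 8 * A2 + - X2 / 24))) +
     1 / 24 * ((X2 - (A2 + 2 * B2) * c^2) * (K * (c^2 / 8 * B2 + - X2 / 24))) +
     1 / 384 * ((X2 - (A2 + 2 * B2) * c^2) * (K * (c^2 * (B2 - A2)))) +
     1 / 18432 * 0"
  by (simp add: field_simps power2_eq_square power4_eq_xxxx)

theorem corollary3p4:
  fixes x :: "nat \<Rightarrow> real" and c :: real and k :: nat and a b :: "nat \<Rightarrow> int"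
  assumes "k \<ge> 1"
  shows "deg8 (Aform x c k a) - deg8 (Aform x c k b) - 1/16 * deg8 (Aform x c k b * chW c k a b)
       = - 1/24 * deg8 (Pform x c k a b * Aform x c k a)
         + 1/24 * deg8 (Pform x c k a b * Aform x c k b)
         + 1/384 * deg8 (Pform x c k a b * Aform x c k b * chW c k a b)
         + 1/18432 * deg8 ((Pform x c k a b)^2 * fps_const (2 ^ k) * chW c k a b)"
proof -
  define Q where "Q = (\<Sum>j<4. (x j)^2) - (\<Sum>t\<in>{1..k}. of_int ((a t)^2 + 2 * (b t)^2)) * c^2"
  have P: "Pform x c k a b = fps_const Q * fps_X^2" using Pform_eq Q_def by simp
  note Aa = Aform_nth[OF C_ev4[where k=k and a=a and c=c] Ahat_ev4[of x]]
  note Ab = Aform_nth[OF C_ev4[where k=k and a=b and c=c] Ahat_ev4[of x]]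
  have e4: "(Aform x c k b * chW c k a b) $ 4 = Aform x c k b $ 0 * chW c k a b $ 4 + Aform x c k b $ 2 * chW c k a b $ 2"
    by (simp add: mult_nth_small chW_nth chW_nth(2)[simplified])
  have e2: "(Aform x c k b * chW c k a b) $ 2 = Aform x c k b $ 0 * chW c k a b $ 2"
    by (simp add: mult_nth_small chW_nth chW_nth(2)[simplified])
  have e0: "(fps_const (2^k) * chW c k a b) $ 0 = 0" by (simp add: chW_nth)
  have "(Pform x c k a b)^2 * fps_const (2 ^ k) * chW c k a b = (fps_const Q * fps_X^2)^2 * (fps_const (2 ^ k) * chW c k a b)"
    by (simp add: P mult.assoc)
  then have z: "deg8 ((Pform x c k a b)^2 * fps_const (2 ^ k) * chW c k a b) = 0"
    unfolding deg8_def by (simp only: P2X e0 mult_zero_right)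
  define K :: real where "K = 2^k"
  define X2 where "X2 = (\<Sum>j<4. (x j)^2)"
  define X4 where "X4 = (\<Sum>j<4. (x j)^4)"
  define A2 where "A2 = (\<Sum>t\<in>{1..k}. (real_of_int (a t))^2)"
  define A4 where "A4 = (\<Sum>t\<in>{1..k}. (real_of_int (a t))^4)"
  define B2 where "B2 = (\<Sum>t\<in>{1..k}. (real_of_int (b t))^2)"
  define B4 where "B4 = (\<Sum>t\<in>{1..k}. (real_of_int (b t))^4)"
  have Aa0: "Aform x c k a $ 0 = K" using Aa(1) K_def by simp
  have Ab0: "Aform x c k b $ 0 = K" using Ab(1) K_def by simp
  have Aa2: "Aform x c k a $ 2 = K*(c^2/8*A2 + (- X2/24))"
    using Aa(2) unfolding sumA K_def A2_def X2_def by simp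
  have Ab2: "Aform x c k b $ 2 = K*(c^2/8*B2 + (- X2/24))"
    using Ab(2) unfolding sumA K_def B2_def X2_def by simp
  have Aa4: "Aform x c k a $ 4 = K*(c^4/384*A4 + ((c^2/8*A2)^2 - c^4/64*A4)/2 + (c^2/8*A2)*(- X2/24) + (7*X4/5760 + ((- X2/24)^2 - X4/576)/2))"
    using Aa(3) unfolding sumA K_def A2_def A4_def X2_def X4_def by simp
  have Ab4: "Aform x c k b $ 4 = K*(c^4/384*B4 + ((c^2/8*B2)^2 - c^4/64*B4)/2 + (c^2/8*B2)*(- X2/24) + (7*X4/5760 + ((- X2/24)^2 - X4/576)/2))"
    using Ab(3) unfolding sumA K_def B2_def B4_def X2_def X4_def by simp
  have W2: "chW c k a b $ 2 = c^2*(B2-A2)" unfolding chW_nth sumB A2_def B2_def ..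
  have W4: "chW c k a b $ 4 = c^4/12*(B4-A4)" unfolding chW_nth sumB A4_def B4_def ..
  have Qe: "Q = X2 - (A2 + 2*B2)*c^2" unfolding Q_def sumB X2_def A2_def B2_def ..
  show ?thesis
    unfolding z
    unfolding deg8_def P mult.assoc PX4 e4 e2
    unfolding Aa0 Ab0 Aa2 Ab2 Aa4 Ab4 W2 W4 Qe chW_nth(1)
    by (rule alg)
qed

end
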